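(* For every $i\in\{1,\ldots,s\}$ and every non-negative integer $r$, $$\boldsymbol{\beta}_G\circ\gamma_i^r=\gamma_i^{r+1}\circ\beta_{G_i}.$$
   Context: Let $G$ be a finite group, $p$ a prime dividing $|G|$, and $\mathbb{F}_p$ the field with $p$ elements. $G$ acts on $\mathbb{F}_pG$ and on $\mathbb{Z}/p^2[G]$ by conjugation. Let $\boldsymbol{\beta}_G:\mathrm{H}^r(G,\mathbb{F}_pG)\to\mathrm{H}^{r+1}(G,\mathbb{F}_pG)$ be the connecting homomorphism of the short exact sequence of $\mathbb{Z}G$-modules $0\to\mathbb{F}_pG\to\mathbb{Z}/p^2[G]\to\mathbb{F}_pG\to0$, where the first map sends $\widehat a g\mapsto\overline{pa}g$ and the second is reduction mod $p$ of the coefficients. For a subgroup $H$, $\beta_H:\mathrm{H}^r(H,\mathbb{F}_p)\to\mathrm{H}^{r+1}(H,\mathbb{F}_p)$ is the usual Bockstein homomorphism of group cohomology (connecting map of $0\to\mathbb{F}_p\to\mathbb{Z}/p^2\to\mathbb{F}_p\to0$). Let $g_1=1,g_2,\ldots,g_s$ be representatives of the conjugacy classes of $G$ and $G_i=C_G(g_i)$. Let $\theta_{g_i}:\mathbb{F}_p\to\mathbb{F}_pG$, $\lambda\mapsto\lambda g_i$ (a $\mathbb{F}_pG_i$-module map), and $\gamma_i:=\mathrm{tr}_{G_i}^G\circ\theta_{g_i}^*:\mathrm{H}^*(G_i,\mathbb{F}_p)\to\mathrm{H}^*(G,\mathbb{F}_pG)$; $\gamma_i^r$ denotes its component in degree $r$.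 *)

theory Defs
  imports "HOL-Algebra.Algebra" "HOL-Library.Function_Algebras"
begin

(* A K-module M with coefficients in Z/n is represented by an integer-valued
   abelian group 'm together with an action act and a predicate zr n u
   meaning "u = 0 in M (mod n)". *)

definition tuples :: "'a set \<Rightarrow> nat \<Rightarrow> 'a list set" where
  "tuples K n = {xs. set xs \<subseteq> K \<and> length xs = n}"

definition del_at :: "nat \<Rightarrow> 'a list \<Rightarrow> 'a list" where
  "del_at j xs = take j xs @ drop (Suc j) xs"

definition hcobd :: "('a list \<Rightarrow> 'm::ab_group_add) \<Rightarrow> 'a list \<Rightarrow> 'm" where
  "hcobd f xs = (\<Sum>j<length xs. if even j then f (del_at j xs) else - f (del_at j xs))"

definition hcochain :: "('g,'b) monoid_scheme \<Rightarrow> 'g set \<Rightarrow> ('g \<Rightarrow> 'm::ab_group_add \<Rightarrow> 'm)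
    \<Rightarrow> (int \<Rightarrow> 'm \<Rightarrow> bool) \<Rightarrow> int \<Rightarrow> nat \<Rightarrow> ('g list \<Rightarrow> 'm) \<Rightarrow> bool" where
  "hcochain G K act zr n r f =
     (\<forall>xs\<in>tuples K (Suc r). \<forall>k\<in>K. zr n (f (map (\<lambda>x. k \<otimes>\<^bsub>G\<^esub> x) xs) - act k (f xs)))"

definition hcocycle :: "('g,'b) monoid_scheme \<Rightarrow> 'g set \<Rightarrow> ('g \<Rightarrow> 'm::ab_group_add \<Rightarrow> 'm)
    \<Rightarrow> (int \<Rightarrow> 'm \<Rightarrow> bool) \<Rightarrow> int \<Rightarrow> nat \<Rightarrow> ('g list \<Rightarrow> 'm) \<Rightarrow> bool" where
  "hcocycle G K act zr n r f =
     (hcochain G K act zr n r f \<and> (\<forall>xs\<in>tuples K (Suc (Suc r)). zr n (hcobd f xs)))"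

definition cohom_eq :: "('g,'b) monoid_scheme \<Rightarrow> 'g set \<Rightarrow> ('g \<Rightarrow> 'm::ab_group_add \<Rightarrow> 'm)
    \<Rightarrow> (int \<Rightarrow> 'm \<Rightarrow> bool) \<Rightarrow> int \<Rightarrow> nat \<Rightarrow> ('g list \<Rightarrow> 'm) \<Rightarrow> ('g list \<Rightarrow> 'm) \<Rightarrow> bool" where
  "cohom_eq G K act zr n r u v =
     (case r of
        0 \<Rightarrow> (\<forall>xs\<in>tuples K 1. zr n (u xs - v xs))
      | Suc q \<Rightarrow> (\<exists>h. hcochain G K act zr n q h \<and>
                    (\<forall>xs\<in>tuples K (Suc r). zr n (u xs - v xs - hcobd h xs))))"

(* Connecting homomorphism of 0 -> M/p -> M/p^2 -> M/p -> 0 (multiplication by p,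
   reduction mod p): lift the cocycle f to a cochain F with values mod p^2,
   take its coboundary and divide by p. dv p divides by p. *)
definition bockstein :: "('g,'b) monoid_scheme \<Rightarrow> 'g set \<Rightarrow> ('g \<Rightarrow> 'm::ab_group_add \<Rightarrow> 'm)
    \<Rightarrow> (int \<Rightarrow> 'm \<Rightarrow> bool) \<Rightarrow> (int \<Rightarrow> 'm \<Rightarrow> 'm) \<Rightarrow> nat \<Rightarrow> nat \<Rightarrow> ('g list \<Rightarrow> 'm) \<Rightarrow> 'g list \<Rightarrow> 'm" where
  "bockstein G K act zr dv p r f =
     (let F = (SOME F. hcochain G K act zr (int p ^ 2) r F \<and>
                        (\<forall>xs\<in>tuples K (Suc r). zr (int p) (F xs - f xs)))
      in (\<lambda>xs. dv (int p) (hcobd F xs)))"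

(* Coefficients F_p (trivial action), represented by integers *)
definition zrF :: "int \<Rightarrow> int \<Rightarrow> bool" where "zrF n u = (u mod n = 0)"
definition actT :: "'g \<Rightarrow> int \<Rightarrow> int" where "actT k u = u"
definition dvF :: "int \<Rightarrow> int \<Rightarrow> int" where "dvF p u = u div p"

(* Coefficients F_p G: coefficient functions on carrier G, with conjugation action
   x . (sum a_y y) = sum a_y (x y x^-1), i.e. (x.u)(y) = u(x^-1 y x) *)
definition zrFG :: "('g,'b) monoid_scheme \<Rightarrow> int \<Rightarrow> ('g \<Rightarrow> int) \<Rightarrow> bool" where
  "zrFG G n u = (\<forall>y\<in>carrier G. u y mod n = 0)"
definition conj_act :: "('g,'b) monoid_scheme \<Rightarrow> 'g \<Rightarrow> ('g \<Rightarrow> int) \<Rightarrow> ('g \<Rightarrow> int)" where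
  "conj_act G x u = (\<lambda>y. u (inv\<^bsub>G\<^esub> x \<otimes>\<^bsub>G\<^esub> y \<otimes>\<^bsub>G\<^esub> x))"
definition dvFG :: "int \<Rightarrow> ('g \<Rightarrow> int) \<Rightarrow> ('g \<Rightarrow> int)" where
  "dvFG p u = (\<lambda>y. u y div p)"

definition centralizer :: "('g,'b) monoid_scheme \<Rightarrow> 'g \<Rightarrow> 'g set" where
  "centralizer G g = {x\<in>carrier G. x \<otimes>\<^bsub>G\<^esub> g = g \<otimes>\<^bsub>G\<^esub> x}"

definition left_cosets :: "('g,'b) monoid_scheme \<Rightarrow> 'g set \<Rightarrow> 'g set set" where
  "left_cosets G H = (\<lambda>a. l_coset G a H) ` carrier G"

(* rho y = y * (chosen representative of H y)^-1, an H-equivariant map G -> H *)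
definition rho :: "('g,'b) monoid_scheme \<Rightarrow> 'g set \<Rightarrow> 'g \<Rightarrow> 'g" where
  "rho G H y = y \<otimes>\<^bsub>G\<^esub> inv\<^bsub>G\<^esub> (SOME z. z \<in> r_coset G H y)"

definition transfer :: "('g,'b) monoid_scheme \<Rightarrow> 'g set \<Rightarrow> ('g \<Rightarrow> 'm::ab_group_add \<Rightarrow> 'm)
    \<Rightarrow> ('g list \<Rightarrow> 'm) \<Rightarrow> 'g list \<Rightarrow> 'm" where
  "transfer G H act f xs =
     (\<Sum>C\<in>left_cosets G H. let s = (SOME s. s \<in> C)
        in act s (f (map (\<lambda>y. rho G H (inv\<^bsub>G\<^esub> s \<otimes>\<^bsub>G\<^esub> y)) xs)))"

definition theta :: "'g \<Rightarrow> int \<Rightarrow> ('g \<Rightarrow> int)" where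
  "theta g u = (\<lambda>x. if x = g then u else 0)"

definition gamma :: "('g,'b) monoid_scheme \<Rightarrow> 'g \<Rightarrow> ('g list \<Rightarrow> int) \<Rightarrow> 'g list \<Rightarrow> ('g \<Rightarrow> int)" where
  "gamma G g f = transfer G (centralizer G g) (conj_act G) (\<lambda>xs. theta g (f xs))"

end

theory Submission imports Defs begin

lemma sum_fun_apply: "(sum f A) x = (\<Sum>a\<in>A. f a x)"
  by (induction A rule: infinite_finite_induct) auto

lemma hcobd_apply: "hcobd F xs y = hcobd (\<lambda>ws. F ws y) xs"
  unfolding hcobd_def sum_fun_apply by (rule sum.cong) auto

lemma hcobd_cong: "(\<And>j. j < length xs \<Longrightarrow> a (del_at j xs) = b (del_at j xs)) \<Longrightarrow> hcobd a xs = hcobd b xs"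
  unfolding hcobd_def by (rule sum.cong) auto

lemma hcobd_add: "hcobd (\<lambda>w. a w + b w) xs = hcobd a xs + hcobd b xs"
  unfolding hcobd_def sum.distrib[symmetric] by (rule sum.cong) auto

lemma hcobd_mult: "hcobd (\<lambda>w. (c::int) * a w) xs = c * hcobd a xs"
  unfolding hcobd_def sum_distrib_left by (rule sum.cong) auto

lemma hcobd_dvd: "(\<And>j. j < length xs \<Longrightarrow> (c::int) dvd a (del_at j xs)) \<Longrightarrow> c dvd hcobd a xs"
  unfolding hcobd_def by (rule dvd_sum) auto

lemma del_at_tuples: "xs \<in> tuples K (Suc n) \<Longrightarrow> j < length xs \<Longrightarrow> del_at j xs \<in> tuples K n"
  unfolding tuples_def del_at_def using set_take_subset set_drop_subset by fastforce

lemma map_del_at: "map f (del_at j xs) = del_at j (map f xs)"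
  by (simp add: del_at_def take_map drop_map)

lemma sum_div_dvd: "finite A \<Longrightarrow> (\<And>a. a \<in> A \<Longrightarrow> (m::int) dvd f a) \<Longrightarrow> sum f A div m = (\<Sum>a\<in>A. f a div m)"
  by (induction A rule: finite_induct) (auto simp: div_plus_div_distrib_dvd_left dvd_sum)

lemma div_diff_lemma:
  fixes P A B :: int assumes "P \<noteq> 0" "P dvd A" "P dvd B" "P^2 dvd (A - B)"
  shows "P dvd (A div P - B div P)"
proof -
  obtain a b where "A = P * a" "B = P * b" using assms by (auto elim!: dvdE)
  with assms show ?thesis by (simp add: power2_eq_square right_diff_distrib[symmetric])
qed


locale cg = group G for G (structure) + fixes g assumes g: "g \<in> carrier G"
begin

abbreviation "H \<equiv> centralizer G g"

lemma H_carrier: "H \<subseteq> carrier G" unfolding centralizer_def by auto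

lemma H_sub: "subgroup H G"
proof (rule subgroup.intro)
  show "H \<subseteq> carrier G" by (rule H_carrier)
  show "\<And>x y. x \<in> H \<Longrightarrow> y \<in> H \<Longrightarrow> x \<otimes> y \<in> H"
    unfolding centralizer_def using g by (auto simp: m_assoc) (metis m_assoc)
  show "\<one> \<in> H" unfolding centralizer_def using g by auto
  show "\<And>x. x \<in> H \<Longrightarrow> inv x \<in> H"
  proof -
    fix x assume x: "x \<in> H"
    hence xc: "x \<in> carrier G" and e: "x \<otimes> g = g \<otimes> x" unfolding centralizer_def by auto
    have "inv x \<otimes> g = inv x \<otimes> (g \<otimes> x) \<otimes> inv x" using xc g by (simp add: m_assoc)
    also have "\<dots> = inv x \<otimes> (x \<otimes> g) \<otimes> inv x" by (simp add: e)
    also have "\<dots> = g \<otimes> inv x" using xc g by (simp add: m_assoc[symmetric])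
    finally show "inv x \<in> H" unfolding centralizer_def using xc by auto
  qed
qed

lemma conj_g_iff: assumes "h \<in> H" "a \<in> carrier G"
  shows "(inv h \<otimes> a \<otimes> h = g) = (a = g)"
proof -
  have hc: "h \<in> carrier G" and e: "h \<otimes> g = g \<otimes> h" using assms unfolding centralizer_def by auto
  have "inv h \<otimes> g \<otimes> h = g" using hc g e by (metis inv_closed l_inv l_one m_assoc)
  moreover have "inv h \<otimes> a \<otimes> h = g \<Longrightarrow> a = g"
  proof -
    assume a: "inv h \<otimes> a \<otimes> h = g"
    have "a = h \<otimes> (inv h \<otimes> a \<otimes> h) \<otimes> inv h" using hc assms(2) by (simp add: m_assoc) (simp add: m_assoc[symmetric])
    also have "\<dots> = h \<otimes> g \<otimes> inv h" by (simp add: a)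
    also have "\<dots> = g" using hc g e by (simp add: m_assoc)
    finally show "a = g" .
  qed
  ultimately show ?thesis by auto
qed

lemma rho_props: assumes "y \<in> carrier G"
  shows "rho G H y \<in> H" "\<And>h. h \<in> H \<Longrightarrow> rho G H (h \<otimes> y) = h \<otimes> rho G H y"
proof -
  let ?z = "SOME z. z \<in> H #> y"
  have "y \<in> H #> y" using rcos_self[OF assms H_sub] .
  hence "?z \<in> H #> y" by (rule someI)
  then obtain h0 where h0: "h0 \<in> H" "?z = h0 \<otimes> y" unfolding r_coset_def by auto
  have h0c: "h0 \<in> carrier G" using h0 H_carrier by auto
  have "rho G H y = inv h0" unfolding rho_def h0(2) using h0c assms
    by (simp add: inv_mult_group m_assoc[symmetric])
  thus "rho G H y \<in> H" using h0 H_sub subgroup.m_inv_closed by metis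
  fix h assume h: "h \<in> H"
  have hc: "h \<in> carrier G" using h H_carrier by auto
  have "H #> (h \<otimes> y) = H #> h #> y" using hc assms H_carrier by (simp add: coset_mult_assoc)
  also have "H #> h = H" using coset_join2[OF hc H_sub h] .
  finally have eq: "H #> (h \<otimes> y) = H #> y" .
  have zc: "?z \<in> carrier G" using h0 h0c assms by simp
  show "rho G H (h \<otimes> y) = h \<otimes> rho G H y" unfolding rho_def eq
    using hc assms zc by (simp add: m_assoc)
qed

lemma lc_finite: "finite (carrier G) \<Longrightarrow> finite (left_cosets G H)"
  unfolding left_cosets_def by simp

lemma lc_rep: assumes "C \<in> left_cosets G H"
  shows "(SOME s. s \<in> C) \<in> C" "(SOME s. s \<in> C) \<in> carrier G" "C = (SOME s. s \<in> C) <# H"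
proof -
  obtain a where a: "a \<in> carrier G" "C = a <# H" using assms unfolding left_cosets_def by auto
  have "a \<in> C" using lcos_self[OF a(1) H_sub] a by simp
  thus s: "(SOME s. s \<in> C) \<in> C" by (rule someI)
  thus "(SOME s. s \<in> C) \<in> carrier G" using a l_coset_carrier H_sub by blast
  show "C = (SOME s. s \<in> C) <# H" using l_repr_independence[OF _ a(1) H_sub] s a by simp
qed

end

context cg begin

abbreviation "rep C \<equiv> (SOME s. s \<in> C)"
abbreviation "LC \<equiv> left_cosets G H"

lemma gamma_apply: "gamma G g \<Phi> xs y = (\<Sum>C\<in>LC. if inv (rep C) \<otimes> y \<otimes> rep C = g
   then \<Phi> (map (\<lambda>z. rho G H (inv (rep C) \<otimes> z)) xs) else 0)"
  unfolding gamma_def transfer_def Let_def conj_act_def theta_def sum_fun_apply by simp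

lemma ws_tuples: "C \<in> LC \<Longrightarrow> xs \<in> tuples (carrier G) n \<Longrightarrow>
   map (\<lambda>z. rho G H (inv (rep C) \<otimes> z)) xs \<in> tuples H n"
  unfolding tuples_def using lc_rep(2) rho_props(1) by auto

lemma gamma_hcobd: "hcobd (\<lambda>ws. gamma G g \<Phi> ws y) xs = gamma G g (hcobd \<Phi>) xs y"
proof -
  define c where "c C = (inv (rep C) \<otimes> y \<otimes> rep C = g)" for C
  define w where "w C = map (\<lambda>z. rho G H (inv (rep C) \<otimes> z)) xs" for C
  have "hcobd (\<lambda>ws. gamma G g \<Phi> ws y) xs = (\<Sum>j<length xs. \<Sum>C\<in>LC.
      if c C then (if even j then \<Phi> (del_at j (w C)) else - \<Phi> (del_at j (w C))) else 0)"
    unfolding hcobd_def gamma_apply c_def w_def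
    by (rule sum.cong) (auto simp: sum_negf[symmetric] map_del_at intro!: sum.cong)
  also have "\<dots> = (\<Sum>C\<in>LC. \<Sum>j<length xs.
      if c C then (if even j then \<Phi> (del_at j (w C)) else - \<Phi> (del_at j (w C))) else 0)"
    by (rule sum.swap)
  also have "\<dots> = gamma G g (hcobd \<Phi>) xs y"
    unfolding hcobd_def gamma_apply c_def[symmetric] w_def[symmetric]
    by (rule sum.cong) (auto simp: w_def)
  finally show ?thesis .
qed

lemma gamma_diff_dvd: assumes "\<And>ws. ws \<in> tuples H n \<Longrightarrow> (m::int) dvd (\<Phi> ws - \<Psi> ws)"
  and "xs \<in> tuples (carrier G) n"
  shows "m dvd (gamma G g \<Phi> xs y - gamma G g \<Psi> xs y)"
  unfolding gamma_apply sum_subtractf[symmetric]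
  by (rule dvd_sum) (use assms ws_tuples in auto)

lemma gamma_dvd: assumes "\<And>ws. ws \<in> tuples H n \<Longrightarrow> (m::int) dvd \<Phi> ws"
  and "xs \<in> tuples (carrier G) n"
  shows "m dvd gamma G g \<Phi> xs y"
  unfolding gamma_apply
  by (rule dvd_sum) (use assms ws_tuples in auto)

lemma gamma_div: assumes "finite (carrier G)" "\<And>ws. ws \<in> tuples H n \<Longrightarrow> (m::int) dvd \<Phi> ws"
  and "xs \<in> tuples (carrier G) n"
  shows "gamma G g \<Phi> xs y div m = gamma G g (\<lambda>ws. \<Phi> ws div m) xs y"
  unfolding gamma_apply
  by (subst sum_div_dvd) (use assms ws_tuples lc_finite in \<open>auto intro!: sum.cong\<close>)

end

context cg begin

lemma lc_bij: assumes x: "x \<in> carrier G" shows "bij_betw (\<lambda>D. x <# D) LC LC"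
proof (rule bij_betw_byWitness[where f'="\<lambda>C. inv x <# C"])
  have Hc: "H \<subseteq> carrier G" by (rule H_carrier)
  show "\<forall>a\<in>LC. inv x <# (x <# a) = a" unfolding left_cosets_def using x Hc
    by (auto simp: lcos_m_assoc m_assoc[symmetric])
  show "\<forall>a\<in>LC. x <# (inv x <# a) = a" unfolding left_cosets_def using x Hc
    by (auto simp: lcos_m_assoc m_assoc[symmetric])
  show "(\<lambda>D. x <# D) ` LC \<subseteq> LC" unfolding left_cosets_def using x Hc
    by (auto simp: lcos_m_assoc)
  show "(\<lambda>D. inv x <# D) ` LC \<subseteq> LC" unfolding left_cosets_def using x Hc
    by (auto simp: lcos_m_assoc)
qed

lemma gamma_equiv:
  assumes hyp: "\<And>ws k. ws \<in> tuples H n \<Longrightarrow> k \<in> H \<Longrightarrow> (m::int) dvd (\<Phi> (map (\<lambda>x. k \<otimes> x) ws) - \<Phi> ws)"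
  and xs: "xs \<in> tuples (carrier G) n" and x: "x \<in> carrier G" and y: "y \<in> carrier G"
  shows "m dvd (gamma G g \<Phi> (map (\<lambda>z. x \<otimes> z) xs) y - gamma G g \<Phi> xs (inv x \<otimes> y \<otimes> x))"
proof -
  define T1 where "T1 C = (if inv (rep C) \<otimes> y \<otimes> rep C = g
   then \<Phi> (map (\<lambda>z. rho G H (inv (rep C) \<otimes> z)) (map (\<lambda>z. x \<otimes> z) xs)) else 0)" for C
  define T2 where "T2 C = (if inv (rep C) \<otimes> (inv x \<otimes> y \<otimes> x) \<otimes> rep C = g
   then \<Phi> (map (\<lambda>z. rho G H (inv (rep C) \<otimes> z)) xs) else 0)" for C
  have "gamma G g \<Phi> (map (\<lambda>z. x \<otimes> z) xs) y = sum T1 LC" unfolding gamma_apply T1_def ..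
  also have "\<dots> = (\<Sum>D\<in>LC. T1 (x <# D))" by (rule sum.reindex_bij_betw[symmetric, OF lc_bij[OF x]])
  finally have e1: "gamma G g \<Phi> (map (\<lambda>z. x \<otimes> z) xs) y = (\<Sum>D\<in>LC. T1 (x <# D))" .
  have e2: "gamma G g \<Phi> xs (inv x \<otimes> y \<otimes> x) = sum T2 LC" unfolding gamma_apply T2_def ..
  have Hc: "H \<subseteq> carrier G" by (rule H_carrier)
  have trm: "m dvd (T1 (x <# D) - T2 D)" if D: "D \<in> LC" for D
  proof -
    define s where "s = rep D"
    define s' where "s' = rep (x <# D)"
    have sc: "s \<in> carrier G" and Ds: "D = s <# H" using lc_rep[OF D] s_def by auto
    have xD: "x <# D \<in> LC" using lc_bij[OF x] D by (auto simp: bij_betw_def)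
    have "s' \<in> x <# D" using lc_rep(1)[OF xD] s'_def by simp
    also have "x <# D = (x \<otimes> s) <# H" using Ds x sc Hc by (simp add: lcos_m_assoc)
    finally obtain h where h: "h \<in> H" "s' = x \<otimes> s \<otimes> h" unfolding l_coset_def by auto
    have hc: "h \<in> carrier G" using h Hc by auto
    have ih: "inv h \<in> H" using h H_sub subgroup.m_inv_closed by metis
    define a where "a = inv s \<otimes> (inv x \<otimes> y \<otimes> x) \<otimes> s"
    have ac: "a \<in> carrier G" using a_def sc x y by simp
    have c1: "inv s' \<otimes> y \<otimes> s' = inv h \<otimes> a \<otimes> h"
      unfolding h(2) a_def using x y sc hc by (simp add: inv_mult_group m_assoc)
    have c2: "(inv s' \<otimes> y \<otimes> s' = g) = (a = g)" unfolding c1 by (rule conj_g_iff[OF h(1) ac])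
    define ws where "ws = map (\<lambda>z. rho G H (inv s \<otimes> z)) xs"
    have wsH: "ws \<in> tuples H n" unfolding ws_def s_def by (rule ws_tuples[OF D xs])
    have mp: "map (\<lambda>z. rho G H (inv s' \<otimes> z)) (map (\<lambda>z. x \<otimes> z) xs) = map (\<lambda>w. inv h \<otimes> w) ws"
      unfolding ws_def map_map o_def
    proof (rule map_cong[OF refl])
      fix z assume "z \<in> set xs"
      hence zc: "z \<in> carrier G" using xs unfolding tuples_def by auto
      have "inv s' \<otimes> (x \<otimes> z) = inv h \<otimes> (inv s \<otimes> z)"
        unfolding h(2) using x zc sc hc by (simp add: inv_mult_group m_assoc) (simp add: m_assoc[symmetric])
      thus "rho G H (inv s' \<otimes> (x \<otimes> z)) = inv h \<otimes> rho G H (inv s \<otimes> z)"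
        using rho_props(2)[of "inv s \<otimes> z" "inv h"] ih zc sc by simp
    qed
    have "T1 (x <# D) = (if a = g then \<Phi> (map (\<lambda>w. inv h \<otimes> w) ws) else 0)"
      unfolding T1_def s'_def[symmetric] c2 mp ..
    moreover have "T2 D = (if a = g then \<Phi> ws else 0)"
      unfolding T2_def s_def[symmetric] a_def[symmetric] ws_def ..
    ultimately show ?thesis using hyp[OF wsH ih] by auto
  qed
  show ?thesis unfolding e1 e2 sum_subtractf[symmetric] by (rule dvd_sum) (rule trm)
qed

end

context cg begin

lemma main:
  fixes p :: nat and f :: "'a list \<Rightarrow> int"
  assumes fin: "finite (carrier G)" and pp: "Factorial_Ring.prime p"
    and fc: "hcocycle G (centralizer G g) actT zrF (int p) r f"
  shows "cohom_eq G (carrier G) (conj_act G) (zrFG G) (int p) (Suc r)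
           (bockstein G (carrier G) (conj_act G) (zrFG G) dvFG p r (gamma G g f))
           (gamma G g (bockstein G (centralizer G g) actT zrF dvF p r f))"
proof -
  define P where "P = int p"
  have P0: "P \<noteq> 0" using pp unfolding P_def by auto
  have f_eq: "\<And>ws k. ws \<in> tuples H (Suc r) \<Longrightarrow> k \<in> H \<Longrightarrow> P dvd (f (map (\<lambda>x. k \<otimes> x) ws) - f ws)"
    using fc unfolding hcocycle_def hcochain_def zrF_def actT_def P_def by (auto simp: dvd_eq_mod_eq_0)
  have f_cocyc: "\<And>ws. ws \<in> tuples H (Suc (Suc r)) \<Longrightarrow> P dvd hcobd f ws"
    using fc unfolding hcocycle_def zrF_def P_def by (auto simp: dvd_eq_mod_eq_0)
  define SH where "SH F = (hcochain G H actT zrF (int p ^ 2) r F \<and>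
                        (\<forall>xs\<in>tuples H (Suc r). zrF (int p) (F xs - f xs)))" for F
  define F0 where "F0 xs = f (map (\<lambda>y. inv (hd xs) \<otimes> y) xs)" for xs
  have "SH F0"
    unfolding SH_def
  proof
    show "hcochain G H actT zrF (int p ^ 2) r F0" unfolding hcochain_def
    proof (intro ballI)
      fix xs k assume xs: "xs \<in> tuples H (Suc r)" and k: "k \<in> H"
      obtain x0 xt where xs0: "xs = x0 # xt" using xs unfolding tuples_def by (cases xs) auto
      have x0: "x0 \<in> carrier G" using xs xs0 H_carrier unfolding tuples_def by auto
      have kc: "k \<in> carrier G" using k H_carrier by auto
      have "map (\<lambda>y. inv (k \<otimes> x0) \<otimes> y) (map (\<lambda>x. k \<otimes> x) xs) = map (\<lambda>y. inv x0 \<otimes> y) xs"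
        unfolding map_map o_def
      proof (rule map_cong[OF refl])
        fix y assume "y \<in> set xs"
        hence "y \<in> carrier G" using xs H_carrier unfolding tuples_def by auto
        thus "inv (k \<otimes> x0) \<otimes> (k \<otimes> y) = inv x0 \<otimes> y" using kc x0
          by (simp add: inv_mult_group m_assoc) (simp add: m_assoc[symmetric])
      qed
      note mm = this
      have hh: "hd (map (\<lambda>x. k \<otimes> x) xs) = k \<otimes> x0" using xs0 by simp
      have hx: "hd xs = x0" using xs0 by simp
      have "F0 (map (\<lambda>x. k \<otimes> x) xs) = F0 xs" unfolding F0_def by (simp only: hh hx mm)
      thus "zrF (int p ^ 2) (F0 (map (\<lambda>x. k \<otimes> x) xs) - actT k (F0 xs))"
        unfolding actT_def zrF_def by simp
    qed
    show "\<forall>xs\<in>tuples H (Suc r). zrF (int p) (F0 xs - f xs)"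
    proof
      fix xs assume xs: "xs \<in> tuples H (Suc r)"
      obtain x0 xt where xs0: "xs = x0 # xt" using xs unfolding tuples_def by (cases xs) auto
      have "x0 \<in> H" using xs xs0 unfolding tuples_def by auto
      hence "inv x0 \<in> H" using H_sub subgroup.m_inv_closed by metis
      from f_eq[OF xs this] show "zrF (int p) (F0 xs - f xs)"
        unfolding F0_def zrF_def P_def using xs0 by (simp add: dvd_eq_mod_eq_0)
    qed
  qed
  define Fh where "Fh = (SOME F. SH F)"
  have SFh: "SH Fh" unfolding Fh_def by (rule someI[of SH F0, OF \<open>SH F0\<close>])
  have Fh_eq: "\<And>ws k. ws \<in> tuples H (Suc r) \<Longrightarrow> k \<in> H \<Longrightarrow> P^2 dvd (Fh (map (\<lambda>x. k \<otimes> x) ws) - Fh ws)"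
    using SFh unfolding SH_def hcochain_def zrF_def actT_def P_def by (auto simp: dvd_eq_mod_eq_0)
  have Fh_lift: "\<And>ws. ws \<in> tuples H (Suc r) \<Longrightarrow> P dvd (Fh ws - f ws)"
    using SFh unfolding SH_def zrF_def P_def by (auto simp: dvd_eq_mod_eq_0)
  have dFh: "P dvd hcobd Fh ws" if ws: "ws \<in> tuples H (Suc (Suc r))" for ws
  proof -
    have "hcobd Fh ws = hcobd (\<lambda>w. (Fh w - f w) + f w) ws" by simp
    also have "\<dots> = hcobd (\<lambda>w. Fh w - f w) ws + hcobd f ws" by (rule hcobd_add)
    finally show ?thesis using f_cocyc[OF ws] hcobd_dvd[of ws P "\<lambda>w. Fh w - f w"]
      Fh_lift del_at_tuples[OF ws] by auto
  qed
  have bH: "bockstein G H actT zrF dvF p r f = (\<lambda>ws. hcobd Fh ws div P)"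
    unfolding bockstein_def Let_def dvF_def Fh_def SH_def P_def ..
  define Gf where "Gf = gamma G g Fh"
  define SG where "SG F = (hcochain G (carrier G) (conj_act G) (zrFG G) (int p ^ 2) r F \<and>
                        (\<forall>xs\<in>tuples (carrier G) (Suc r). zrFG G (int p) (F xs - gamma G g f xs)))" for F
  have Gf_eq: "P^2 dvd (Gf (map (\<lambda>z. x \<otimes> z) xs) y - Gf xs (inv x \<otimes> y \<otimes> x))"
    if "xs \<in> tuples (carrier G) (Suc r)" "x \<in> carrier G" "y \<in> carrier G" for xs x y
    unfolding Gf_def by (rule gamma_equiv[OF Fh_eq that])
  have Gf_lift: "P dvd (Gf xs y - gamma G g f xs y)" if "xs \<in> tuples (carrier G) (Suc r)" for xs y
    unfolding Gf_def by (rule gamma_diff_dvd[OF Fh_lift that])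
  have "SG Gf" unfolding SG_def hcochain_def zrFG_def conj_act_def
  proof (intro conjI ballI)
    fix xs k y assume "xs \<in> tuples (carrier G) (Suc r)" "k \<in> carrier G" "y \<in> carrier G"
    from Gf_eq[OF this] show "(Gf (map (\<lambda>x. k \<otimes> x) xs) - (\<lambda>y. Gf xs (inv k \<otimes> y \<otimes> k))) y mod int p ^ 2 = 0"
      unfolding P_def by (simp add: dvd_eq_mod_eq_0)
  next
    fix xs y assume "xs \<in> tuples (carrier G) (Suc r)" "y \<in> carrier G"
    from Gf_lift[OF this(1), of y] show "(Gf xs - gamma G g f xs) y mod int p = 0"
      unfolding P_def by (simp add: dvd_eq_mod_eq_0)
  qed
  define Fg where "Fg = (SOME F. SG F)"
  have SFg: "SG Fg" unfolding Fg_def by (rule someI[of SG Gf, OF \<open>SG Gf\<close>])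
  have Fg_eq: "P^2 dvd (Fg (map (\<lambda>z. x \<otimes> z) xs) y - Fg xs (inv x \<otimes> y \<otimes> x))"
    if "xs \<in> tuples (carrier G) (Suc r)" "x \<in> carrier G" "y \<in> carrier G" for xs x y
  proof -
    have "zrFG G (int p ^ 2) (Fg (map (\<lambda>z. x \<otimes> z) xs) - conj_act G x (Fg xs))"
      using SFg that(1,2) unfolding SG_def hcochain_def by blast
    thus ?thesis using that(3) unfolding zrFG_def conj_act_def P_def by (simp add: dvd_eq_mod_eq_0)
  qed
  have Fg_lift: "P dvd (Fg xs y - gamma G g f xs y)" if "xs \<in> tuples (carrier G) (Suc r)" "y \<in> carrier G" for xs y
  proof -
    have "zrFG G (int p) (Fg xs - gamma G g f xs)" using SFg that(1) unfolding SG_def by blast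
    thus ?thesis using that(2) unfolding zrFG_def P_def by (simp add: dvd_eq_mod_eq_0)
  qed
  have bG: "bockstein G (carrier G) (conj_act G) (zrFG G) dvFG p r (gamma G g f) = (\<lambda>xs y. hcobd Fg xs y div P)"
    unfolding bockstein_def Let_def dvFG_def Fg_def SG_def P_def ..
  have FG: "P dvd (Fg xs y - Gf xs y)" if "xs \<in> tuples (carrier G) (Suc r)" "y \<in> carrier G" for xs y
    using dvd_diff[OF Fg_lift[OF that] Gf_lift[OF that(1), of y]] by simp
  define h where "h xs y = (Fg xs y - Gf xs y) div P" for xs y
  show ?thesis unfolding cohom_eq_def nat.case bG bH[unfolded P_def] P_def[symmetric]
  proof (intro exI conjI)
    show "hcochain G (carrier G) (conj_act G) (zrFG G) P r h"
      unfolding hcochain_def zrFG_def conj_act_def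
    proof (intro ballI)
      fix xs x y assume xs: "xs \<in> tuples (carrier G) (Suc r)" and x: "x \<in> carrier G" and y: "y \<in> carrier G"
      have xs': "map (\<lambda>z. x \<otimes> z) xs \<in> tuples (carrier G) (Suc r)" using xs x unfolding tuples_def by auto
      have y': "inv x \<otimes> y \<otimes> x \<in> carrier G" using x y by simp
      have "P dvd (h (map (\<lambda>z. x \<otimes> z) xs) y - h xs (inv x \<otimes> y \<otimes> x))"
        unfolding h_def
        apply (rule div_diff_lemma[OF P0 FG[OF xs' y] FG[OF xs y']])
        using dvd_diff[OF Fg_eq[OF xs x y] Gf_eq[OF xs x y]] by (simp add: algebra_simps)
      thus "(h (map (\<lambda>z. x \<otimes> z) xs) - (\<lambda>ya. h xs (inv x \<otimes> ya \<otimes> x))) y mod P = 0"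
        by (simp add: dvd_eq_mod_eq_0)
    qed
    show "\<forall>xs\<in>tuples (carrier G) (Suc (Suc r)). zrFG G P ((\<lambda>y. hcobd Fg xs y div P) -
        gamma G g (\<lambda>ws. hcobd Fh ws div P) xs - hcobd h xs)"
      unfolding zrFG_def
    proof (intro ballI)
      fix xs y assume xs: "xs \<in> tuples (carrier G) (Suc (Suc r))" and y: "y \<in> carrier G"
      have dl: "\<And>j. j < length xs \<Longrightarrow> del_at j xs \<in> tuples (carrier G) (Suc r)"
        using del_at_tuples[OF xs] .
      have "hcobd Fg xs y = hcobd (\<lambda>w. Gf w y + P * h w y) xs"
        unfolding hcobd_apply[of Fg]
        by (rule hcobd_cong) (use FG dl y in \<open>auto simp: h_def\<close>)
      also have "\<dots> = hcobd (\<lambda>w. Gf w y) xs + P * hcobd (\<lambda>w. h w y) xs"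
        by (simp add: hcobd_add hcobd_mult)
      also have "hcobd (\<lambda>w. Gf w y) xs = gamma G g (hcobd Fh) xs y"
        unfolding Gf_def by (rule gamma_hcobd)
      finally have e1: "hcobd Fg xs y = gamma G g (hcobd Fh) xs y + P * hcobd h xs y"
        by (simp add: hcobd_apply[of h])
      have dv: "P dvd gamma G g (hcobd Fh) xs y" by (rule gamma_dvd[OF dFh xs])
      have e2: "gamma G g (\<lambda>ws. hcobd Fh ws div P) xs y = gamma G g (hcobd Fh) xs y div P"
        by (rule gamma_div[OF fin dFh xs, symmetric])
      show "((\<lambda>y. hcobd Fg xs y div P) - gamma G g (\<lambda>ws. hcobd Fh ws div P) xs - hcobd h xs) y mod P = 0"
      proof -
        obtain q where q: "gamma G g (hcobd Fh) xs y = P * q" using dv by (auto elim!: dvdE)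
        have "hcobd Fg xs y div P = q + hcobd h xs y" unfolding e1 q using P0
          by (simp add: distrib_left[symmetric])
        moreover have "gamma G g (\<lambda>ws. hcobd Fh ws div P) xs y = q" unfolding e2 q using P0 by simp
        ultimately show ?thesis by simp
      qed
    qed
  qed
qed

end
theorem lemma2p3:
  fixes G :: "('g, 'b) monoid_scheme" and p :: nat and g :: 'g and r :: nat
    and f :: "'g list \<Rightarrow> int"
  assumes "group G" and "finite (carrier G)" and "Factorial_Ring.prime p" and "p dvd order G"
    and "g \<in> carrier G"
    and "hcocycle G (centralizer G g) actT zrF (int p) r f"
  shows "cohom_eq G (carrier G) (conj_act G) (zrFG G) (int p) (Suc r)
           (bockstein G (carrier G) (conj_act G) (zrFG G) dvFG p r (gamma G g f))
           (gamma G g (bockstein G (centralizer G g) actT zrF dvF p r f))"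
proof -
  interpret cg G g using assms(1,5) by (simp add: cg_def cg_axioms_def)
  show ?thesis by (rule main[OF assms(2,3,6)])
qed

end
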